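(* Let $(A,B,R)$ be a formal context whose concept lattice $\mathcal C(A,B,R)$ has no infinite chains, and let $C_l\in\mathcal C(A,B,R)$ be a meet-irreducible concept. Let $(A^*,B,R^* )$ be the context produced by Construction M below. Then $(\mathcal C(A,B,R)\setminus\{C_l\},\le)\cong(\mathcal C(A^*,B,R^* ),\le^* )$. Construction M. Let $\mathcal S(C_l)=\{C\in\mathcal C(A,B,R)\mid C<C_l\}$ and $C_l^s=\bigvee\mathcal S(C_l)$ (the bottom if $\mathcal S(C_l)=\varnothing$). Put $A'=A\setminus\mathrm{Atg}(C_l)$. (1) If $C_l^s\neq C_l$: if there exists a meet-decomposition of $C_l^s$ not containing $C_l$, or $\mathrm{Atg}(C_l^s)\neq\varnothing$, then $A^*=A'$ and $R^*=R\cap(A^*\times B)$. Otherwise $A^*=A'\cup\{a^*\}$ for a new attribute $a^*\notin A$ and $R^*=(R\cap(A'\times B))\cup\{(a^*,b)\mid b\in\mathcal E(C_l^s)\}$. (2) If $C_l^s=C_l$: let $\{C_l^{s_i}\mid i\in\Gamma\}$ be the maximal elements of $\mathcal S(C_l)$ and $\Gamma'=\{i\in\Gamma\mid$ every meet-decomposition of $C_l^{s_i}$ contains $C_l$, and $\mathrm{Atg}(C_l^{s_i})=\varnothing\}$. If $\Gamma'=\varnothing$, then $A^*=A'$ and $R^*=R\cap(A^*\times B)$. Otherwise $A^*=A'\cup\{a_i^*\mid i\in\Gamma'\}$ with pairwise distinct new attributes and $R^*=(R\cap(A'\times B))\cup\{(a_i^*,b)\mid i\in\Gamma',\ b\in\mathcal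 E(C_l^{s_i})\}$.
   Context: Formal context $(A,B,R)$, $R\subseteq A\times B$; $X^{\uparrow}=\{a\in A\mid (a,x)\in R\ \forall x\in X\}$, $Y^{\downarrow}=\{x\in B\mid (a,x)\in R\ \forall a\in Y\}$; concepts are pairs $(X,Y)$ with $X^\uparrow=Y$, $Y^\downarrow=X$, ordered by inclusion of extents; $\mathcal E(C)$ denotes the extent of concept $C$. $\mathrm{Atg}(C)=\{a\in A\mid (\{a\}^{\downarrow},\{a\}^{\downarrow\uparrow})=C\}$ (attributes generating $C$). A concept is meet-irreducible if it is not the top and is not the meet of two concepts both different from it. A meet-decomposition of a concept $C$ is a set $\psi$ of concepts with $C\notin\psi$ and $\bigwedge\psi=C$. $\le^*$ is the extent-inclusion order on $\mathcal C(A^*,B,R^* )$. *)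

theory Defs
  imports Main
begin

text \<open>Formal context (A,B,R) with R \<subseteq> A \<times> B. A concept is a pair (X,Y),
  X \<subseteq> B the extent, Y \<subseteq> A the intent.\<close>

definition up :: "'a set \<Rightarrow> ('a \<times> 'b) set \<Rightarrow> 'b set \<Rightarrow> 'a set" where
  "up A R X = {a \<in> A. \<forall>x\<in>X. (a, x) \<in> R}"

definition down :: "'b set \<Rightarrow> ('a \<times> 'b) set \<Rightarrow> 'a set \<Rightarrow> 'b set" where
  "down B R Y = {x \<in> B. \<forall>a\<in>Y. (a, x) \<in> R}"

definition concepts :: "'a set \<Rightarrow> 'b set \<Rightarrow> ('a \<times> 'b) set \<Rightarrow> ('b set \<times> 'a set) set" where
  "concepts A B R = {(X, Y). up A R X = Y \<and> down B R Y = X}"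

definition cle :: "('b set \<times> 'a set) \<Rightarrow> ('b set \<times> 'a set) \<Rightarrow> bool" where
  "cle C D \<longleftrightarrow> fst C \<subseteq> fst D"

definition is_glb :: "'a set \<Rightarrow> 'b set \<Rightarrow> ('a \<times> 'b) set \<Rightarrow> ('b set \<times> 'a set) set
    \<Rightarrow> ('b set \<times> 'a set) \<Rightarrow> bool" where
  "is_glb A B R \<psi> C \<longleftrightarrow> C \<in> concepts A B R \<and> (\<forall>D\<in>\<psi>. cle C D) \<and>
     (\<forall>E\<in>concepts A B R. (\<forall>D\<in>\<psi>. cle E D) \<longrightarrow> cle E C)"

definition is_lub :: "'a set \<Rightarrow> 'b set \<Rightarrow> ('a \<times> 'b) set \<Rightarrow> ('b set \<times> 'a set) set
    \<Rightarrow> ('b set \<times> 'a set) \<Rightarrow> bool" where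
  "is_lub A B R S C \<longleftrightarrow> C \<in> concepts A B R \<and> (\<forall>D\<in>S. cle D C) \<and>
     (\<forall>E\<in>concepts A B R. (\<forall>D\<in>S. cle D E) \<longrightarrow> cle C E)"

definition cjoin :: "'a set \<Rightarrow> 'b set \<Rightarrow> ('a \<times> 'b) set \<Rightarrow> ('b set \<times> 'a set) set
    \<Rightarrow> ('b set \<times> 'a set)" where
  "cjoin A B R S = (THE C. is_lub A B R S C)"

definition ctop :: "'a set \<Rightarrow> 'b set \<Rightarrow> ('a \<times> 'b) set \<Rightarrow> ('b set \<times> 'a set)" where
  "ctop A B R = (THE C. C \<in> concepts A B R \<and> (\<forall>D\<in>concepts A B R. cle D C))"

definition meet_irreducible :: "'a set \<Rightarrow> 'b set \<Rightarrow> ('a \<times> 'b) set \<Rightarrow> ('b set \<times> 'a set) \<Rightarrow> bool" where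
  "meet_irreducible A B R C \<longleftrightarrow> C \<in> concepts A B R \<and> C \<noteq> ctop A B R \<and>
     \<not> (\<exists>D1 D2. D1 \<in> concepts A B R \<and> D2 \<in> concepts A B R \<and> D1 \<noteq> C \<and> D2 \<noteq> C \<and>
               is_glb A B R {D1, D2} C)"

definition meet_decomposition :: "'a set \<Rightarrow> 'b set \<Rightarrow> ('a \<times> 'b) set \<Rightarrow> ('b set \<times> 'a set)
    \<Rightarrow> ('b set \<times> 'a set) set \<Rightarrow> bool" where
  "meet_decomposition A B R C \<psi> \<longleftrightarrow> \<psi> \<subseteq> concepts A B R \<and> C \<notin> \<psi> \<and> is_glb A B R \<psi> C"

definition Atg :: "'a set \<Rightarrow> 'b set \<Rightarrow> ('a \<times> 'b) set \<Rightarrow> ('b set \<times> 'a set) \<Rightarrow> 'a set" where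
  "Atg A B R C = {a \<in> A. (down B R {a}, up A R (down B R {a})) = C}"

definition no_infinite_chains :: "'a set \<Rightarrow> 'b set \<Rightarrow> ('a \<times> 'b) set \<Rightarrow> bool" where
  "no_infinite_chains A B R \<longleftrightarrow>
     (\<forall>Ch \<subseteq> concepts A B R. (\<forall>C\<in>Ch. \<forall>D\<in>Ch. cle C D \<or> cle D C) \<longrightarrow> finite Ch)"

definition strictly_below :: "'a set \<Rightarrow> 'b set \<Rightarrow> ('a \<times> 'b) set \<Rightarrow> ('b set \<times> 'a set)
    \<Rightarrow> ('b set \<times> 'a set) set" where
  "strictly_below A B R Cl = {C \<in> concepts A B R. cle C Cl \<and> C \<noteq> Cl}"

definition maximal_below :: "'a set \<Rightarrow> 'b set \<Rightarrow> ('a \<times> 'b) set \<Rightarrow> ('b set \<times> 'a set)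
    \<Rightarrow> ('b set \<times> 'a set) set" where
  "maximal_below A B R Cl = {C \<in> strictly_below A B R Cl.
      \<not> (\<exists>D\<in>strictly_below A B R Cl. cle C D \<and> C \<noteq> D)}"

definition needs_new :: "'a set \<Rightarrow> 'b set \<Rightarrow> ('a \<times> 'b) set \<Rightarrow> ('b set \<times> 'a set)
    \<Rightarrow> ('b set \<times> 'a set) \<Rightarrow> bool" where
  "needs_new A B R Cl C \<longleftrightarrow>
     (\<forall>\<psi>. meet_decomposition A B R C \<psi> \<longrightarrow> Cl \<in> \<psi>) \<and> Atg A B R C = {}"

text \<open>The new attribute attached to the
  concept C is represented as Inr C (fresh, since old attributes are tagged Inl).
  Case (1): C_l^s \<noteq> C_l, one new attribute a* = Inr C_l^s iff needed;
  Case (2): C_l^s = C_l, new attributes a_i* = Inr C_l^{s_i} for i \<in> \<Gamma>'.\<close>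
definition new_attrs :: "'a set \<Rightarrow> 'b set \<Rightarrow> ('a \<times> 'b) set \<Rightarrow> ('b set \<times> 'a set)
    \<Rightarrow> ('b set \<times> 'a set) set" where
  "new_attrs A B R Cl =
     (let Cs = cjoin A B R (strictly_below A B R Cl) in
      if Cs \<noteq> Cl then (if needs_new A B R Cl Cs then {Cs} else {})
      else {C \<in> maximal_below A B R Cl. needs_new A B R Cl C})"

definition Astar :: "'a set \<Rightarrow> 'b set \<Rightarrow> ('a \<times> 'b) set \<Rightarrow> ('b set \<times> 'a set)
    \<Rightarrow> ('a + ('b set \<times> 'a set)) set" where
  "Astar A B R Cl = Inl ` (A - Atg A B R Cl) \<union> Inr ` new_attrs A B R Cl"

definition Rstar :: "'a set \<Rightarrow> 'b set \<Rightarrow> ('a \<times> 'b) set \<Rightarrow> ('b set \<times> 'a set)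
    \<Rightarrow> (('a + ('b set \<times> 'a set)) \<times> 'b) set" where
  "Rstar A B R Cl =
     {(Inl a, b) | a b. a \<in> A - Atg A B R Cl \<and> (a, b) \<in> R} \<union>
     {(Inr C, b) | C b. C \<in> new_attrs A B R Cl \<and> b \<in> fst C}"

end

theory Submission
  imports Defs
begin


definition cl :: "'b set \<Rightarrow> 'b set set \<Rightarrow> 'b set set" where
  "cl B G = {B \<inter> \<Inter>S | S. S \<subseteq> G}"

definition gens :: "'a set \<Rightarrow> 'b set \<Rightarrow> ('a \<times> 'b) set \<Rightarrow> 'b set set" where
  "gens A B R = (\<lambda>a. down B R {a}) ` A"

lemma cl_char: "X \<in> cl B G \<longleftrightarrow> X = B \<inter> \<Inter>{g \<in> G. X \<subseteq> g}"
proof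
  assume "X \<in> cl B G"
  then obtain S where S: "S \<subseteq> G" "X = B \<inter> \<Inter>S" unfolding cl_def by blast
  show "X = B \<inter> \<Inter>{g \<in> G. X \<subseteq> g}"
  proof
    show "X \<subseteq> B \<inter> \<Inter>{g \<in> G. X \<subseteq> g}" using S by blast
    have "S \<subseteq> {g \<in> G. X \<subseteq> g}" using S by blast
    then show "B \<inter> \<Inter>{g \<in> G. X \<subseteq> g} \<subseteq> X" using S by blast
  qed
next
  assume "X = B \<inter> \<Inter>{g \<in> G. X \<subseteq> g}"
  then show "X \<in> cl B G" unfolding cl_def by blast
qed

lemma cl_subset: "X \<in> cl B G \<Longrightarrow> X \<subseteq> B"
  unfolding cl_def by blast

lemma cl_Inter:
  assumes "\<X> \<subseteq> cl B G" shows "B \<inter> \<Inter>\<X> \<in> cl B G"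
proof -
  let ?Z = "B \<inter> \<Inter>\<X>"
  have "?Z = B \<inter> \<Inter>{g \<in> G. ?Z \<subseteq> g}"
  proof
    show "?Z \<subseteq> B \<inter> \<Inter>{g \<in> G. ?Z \<subseteq> g}" by blast
    show "B \<inter> \<Inter>{g \<in> G. ?Z \<subseteq> g} \<subseteq> ?Z"
    proof
      fix x assume x: "x \<in> B \<inter> \<Inter>{g \<in> G. ?Z \<subseteq> g}"
      have "x \<in> X" if "X \<in> \<X>" for X
      proof -
        have XX: "X = B \<inter> \<Inter>{g \<in> G. X \<subseteq> g}" using assms that cl_char[THEN iffD1] by blast
        have "x \<in> B \<inter> \<Inter>{g \<in> G. X \<subseteq> g}" using x that by blast
        then show ?thesis using XX by simp
      qed
      then show "x \<in> ?Z" using x by blast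
    qed
  qed
  then show ?thesis by (rule cl_char[THEN iffD2])
qed

lemma cl_gen: "g \<in> G \<Longrightarrow> g \<subseteq> B \<Longrightarrow> g \<in> cl B G"
  unfolding cl_def by (rule CollectI, rule exI[of _ "{g}"]) auto

lemma cl_Int2: "X \<in> cl B G \<Longrightarrow> Y \<in> cl B G \<Longrightarrow> X \<inter> Y \<in> cl B G"
  using cl_Inter[of "{X,Y}" B G] cl_subset[of X B G] by (metis Inf_insert Int_absorb1 cInf_singleton empty_subsetI inf.coboundedI1 insert_subset)

lemma cl_mono: "G \<subseteq> H \<Longrightarrow> cl B G \<subseteq> cl B H"
  unfolding cl_def by blast

lemma down_eq: "down B R Y = B \<inter> \<Inter>((\<lambda>a. down B R {a}) ` Y)"
  by (auto simp: down_def)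

lemma down_up_down: "Y \<subseteq> A \<Longrightarrow> down B R (up A R (down B R Y)) = down B R Y"
  by (auto simp: down_def up_def)

lemma concept_fst: "C \<in> concepts A B R \<Longrightarrow> C = (fst C, up A R (fst C))"
  unfolding concepts_def by auto

lemma concept_sub: "C \<in> concepts A B R \<Longrightarrow> fst C \<subseteq> B"
  unfolding concepts_def down_def by auto

lemma concept_eqI: "C \<in> concepts A B R \<Longrightarrow> D \<in> concepts A B R \<Longrightarrow> fst C = fst D \<Longrightarrow> C = D"
  by (metis concept_fst)

lemma concept_cl: "(X, up A R X) \<in> concepts A B R \<longleftrightarrow> X \<in> cl B (gens A B R)"
proof
  assume "(X, up A R X) \<in> concepts A B R"
  then have X: "X = down B R (up A R X)" unfolding concepts_def by auto
  have "up A R X \<subseteq> A" unfolding up_def by auto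
  then have "(\<lambda>a. down B R {a}) ` (up A R X) \<subseteq> gens A B R" unfolding gens_def by auto
  moreover have X2: "X = B \<inter> \<Inter>((\<lambda>a. down B R {a}) ` (up A R X))" by (rule trans[OF X down_eq])
  ultimately show "X \<in> cl B (gens A B R)" unfolding cl_def by blast
next
  assume "X \<in> cl B (gens A B R)"
  then obtain S where S: "S \<subseteq> gens A B R" "X = B \<inter> \<Inter>S" unfolding cl_def by blast
  define Y where "Y = {a \<in> A. down B R {a} \<in> S}"
  have "S = (\<lambda>a. down B R {a}) ` Y" using S(1) unfolding Y_def gens_def by auto
  then have XY: "X = down B R Y" using S(2) down_eq[of B R Y] by simp
  have "Y \<subseteq> A" unfolding Y_def by auto
  then have "down B R (up A R X) = X" using XY down_up_down[of Y A B R] by simp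
  then show "(X, up A R X) \<in> concepts A B R" unfolding concepts_def by auto
qed

lemma concept_in_cl: "C \<in> concepts A B R \<Longrightarrow> fst C \<in> cl B (gens A B R)"
proof -
  assume C: "C \<in> concepts A B R"
  then have "(fst C, up A R (fst C)) \<in> concepts A B R" using concept_fst[OF C] by simp
  then show ?thesis by (rule concept_cl[THEN iffD1])
qed

lemma cl_concept: "X \<in> cl B (gens A B R) \<Longrightarrow> (X, up A R X) \<in> concepts A B R"
  by (rule concept_cl[THEN iffD2])

lemma glb_fst:
  assumes "is_glb A B R \<psi> C" "\<psi> \<subseteq> concepts A B R"
  shows "fst C = B \<inter> \<Inter>(fst ` \<psi>)"
proof -
  let ?Z = "B \<inter> \<Inter>(fst ` \<psi>)"
  have "fst ` \<psi> \<subseteq> cl B (gens A B R)" using assms(2) concept_in_cl by blast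
  then have "?Z \<in> cl B (gens A B R)" by (rule cl_Inter)
  then have E: "(?Z, up A R ?Z) \<in> concepts A B R" by (rule cl_concept)
  have "\<forall>D\<in>\<psi>. cle (?Z, up A R ?Z) D" unfolding cle_def by auto
  then have "?Z \<subseteq> fst C" using assms(1) E unfolding is_glb_def cle_def by (metis fst_conv)
  moreover have "fst C \<subseteq> ?Z" using assms(1) concept_sub unfolding is_glb_def cle_def by blast
  ultimately show ?thesis by blast
qed

lemma lub_exists:
  assumes "S \<subseteq> concepts A B R"
  shows "is_lub A B R S (cjoin A B R S)"
proof -
  let ?U = "\<Union>(fst ` S)"
  let ?Z = "down B R (up A R ?U)"
  have "up A R ?U \<subseteq> A" unfolding up_def by auto
  then have ZZ: "down B R (up A R ?Z) = ?Z" by (rule down_up_down)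
  then have C: "(?Z, up A R ?Z) \<in> concepts A B R" unfolding concepts_def by auto
  have UB: "?U \<subseteq> B" using assms concept_sub by blast
  have UZ: "?U \<subseteq> ?Z" using UB unfolding down_def up_def by auto
  have lub: "is_lub A B R S (?Z, up A R ?Z)"
    unfolding is_lub_def
  proof (intro conjI ballI impI)
    show "(?Z, up A R ?Z) \<in> concepts A B R" by (rule C)
    fix D assume "D \<in> S" then show "cle D (?Z, up A R ?Z)" using UZ unfolding cle_def by auto
  next
    fix E assume E: "E \<in> concepts A B R" "\<forall>D\<in>S. cle D E"
    then have "?U \<subseteq> fst E" unfolding cle_def by auto
    then have "?Z \<subseteq> down B R (up A R (fst E))" unfolding down_def up_def by blast
    also have "\<dots> = fst E" using E(1) unfolding concepts_def by auto
    finally show "cle (?Z, up A R ?Z) E" unfolding cle_def by simp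
  qed
  have uniq: "C' = (?Z, up A R ?Z)" if "is_lub A B R S C'" for C'
  proof -
    have a: "C' \<in> concepts A B R" using that unfolding is_lub_def by blast
    have "cle C' (?Z, up A R ?Z)" using that C lub unfolding is_lub_def by blast
    moreover have "cle (?Z, up A R ?Z) C'" using that a lub unfolding is_lub_def by blast
    ultimately have "fst C' = ?Z" unfolding cle_def by auto
    then show ?thesis using concept_eqI[OF a C] by simp
  qed
  show ?thesis unfolding cjoin_def using lub uniq by (metis theI)
qed



lemma no_chain_seq:
  fixes f :: "nat \<Rightarrow> 'b set"
  assumes "\<And>Ch. Ch \<subseteq> K \<Longrightarrow> \<forall>X\<in>Ch. \<forall>Y\<in>Ch. X \<subseteq> Y \<or> Y \<subseteq> X \<Longrightarrow> finite Ch"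
    and "range f \<subseteq> K" and "inj f" and "\<And>i j. f i \<subseteq> f j \<or> f j \<subseteq> f i"
  shows False
proof -
  have "finite (range f)" using assms(1)[of "range f"] assms(2,4) by blast
  then have "finite (UNIV :: nat set)" using assms(3) finite_imageD by blast
  then show False by simp
qed

lemma incr_seq: "(\<And>i. (f::nat\<Rightarrow>'b set) i \<subset> f (Suc i)) \<Longrightarrow> i < j \<Longrightarrow> f i \<subset> f j"
  by (rule lift_Suc_mono_less)

lemma decr_seq:
  assumes "\<And>i. (f::nat\<Rightarrow>'b set) (Suc i) \<subset> f i" shows "f (i + Suc k) \<subset> f i"
proof (induction k)
  case 0 then show ?case using assms by simp
next
  case (Suc k)
  have "f (i + Suc (Suc k)) \<subset> f (i + Suc k)" using assms[of "i + Suc k"] by simp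
  then show ?case using Suc by blast
qed

locale M =
  fixes A :: "'a set" and B :: "'b set" and R :: "('a \<times> 'b) set" and Cl :: "'b set \<times> 'a set"
  assumes nic: "no_infinite_chains A B R" and mi: "meet_irreducible A B R Cl"
begin

abbreviation "G \<equiv> gens A B R"
abbreviation "L \<equiv> fst Cl"

lemma Cl_concept: "Cl \<in> concepts A B R" using mi unfolding meet_irreducible_def by blast
lemma L_cl: "L \<in> cl B G" using Cl_concept concept_in_cl by blast
lemma L_sub: "L \<subseteq> B" using Cl_concept concept_sub by blast

lemma chain_finite:
  assumes "Ch \<subseteq> cl B G" "\<forall>X\<in>Ch. \<forall>Y\<in>Ch. X \<subseteq> Y \<or> Y \<subseteq> X"
  shows "finite Ch"
proof -
  let ?h = "\<lambda>X. (X, up A R X)"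
  have "?h ` Ch \<subseteq> concepts A B R" using assms(1) cl_concept by blast
  moreover have "\<forall>C\<in>?h ` Ch. \<forall>D\<in>?h ` Ch. cle C D \<or> cle D C" using assms(2) unfolding cle_def by auto
  ultimately have "finite (?h ` Ch)" using nic unfolding no_infinite_chains_def by blast
  moreover have "inj_on ?h Ch" by (auto intro: inj_onI)
  ultimately show ?thesis using finite_imageD by blast
qed

lemma wf_up: "wf {(Y,X). X \<in> cl B G \<and> Y \<in> cl B G \<and> X \<subset> Y}"
proof (unfold wf_iff_no_infinite_down_chain, rule notI)
  assume "\<exists>f. \<forall>i. (f (Suc i), f i) \<in> {(Y,X). X \<in> cl B G \<and> Y \<in> cl B G \<and> X \<subset> Y}"
  then obtain f where f: "\<And>i. f i \<in> cl B G" "\<And>i. f i \<subset> f (Suc i)" by blast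
  have lt: "i < j \<Longrightarrow> f i \<subset> f j" for i j using incr_seq[of f] f(2) by blast
  have inj: "inj f" by (rule injI) (metis lt less_irrefl linorder_neqE_nat)
  have ch: "f i \<subseteq> f j \<or> f j \<subseteq> f i" for i j
    by (metis lt linorder_neqE_nat order.strict_implies_order order_refl)
  have rng: "range f \<subseteq> cl B G" using f(1) by blast
  show False by (rule no_chain_seq[of "cl B G" f, OF chain_finite rng inj ch])
qed

lemma wf_down: "wf {(Y,X). X \<in> cl B G \<and> Y \<in> cl B G \<and> Y \<subset> X}"
proof (unfold wf_iff_no_infinite_down_chain, rule notI)
  assume "\<exists>f. \<forall>i. (f (Suc i), f i) \<in> {(Y,X). X \<in> cl B G \<and> Y \<in> cl B G \<and> Y \<subset> X}"
  then obtain f where f: "\<And>i. f i \<in> cl B G" "\<And>i. f (Suc i) \<subset> f i" by blast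
  have lt: "i < j \<Longrightarrow> f j \<subset> f i" for i j using decr_seq[of f i "j - i - 1"] f(2)
    by (metis Suc_diff_Suc add_Suc_right diff_Suc_1 le_add_diff_inverse less_imp_le_nat)
  have inj: "inj f" by (rule injI) (metis lt less_irrefl linorder_neqE_nat)
  have ch: "f i \<subseteq> f j \<or> f j \<subseteq> f i" for i j
    by (metis lt linorder_neqE_nat order.strict_implies_order order_refl)
  have rng: "range f \<subseteq> cl B G" using f(1) by blast
  show False by (rule no_chain_seq[of "cl B G" f, OF chain_finite rng inj ch])
qed

lemma mi2:
  assumes "d \<in> cl B G" "e \<in> cl B G" "d \<noteq> L" "e \<noteq> L" "d \<inter> e = L"
  shows False
proof -
  let ?D1 = "(d, up A R d)" and ?D2 = "(e, up A R e)"
  have c: "?D1 \<in> concepts A B R" "?D2 \<in> concepts A B R" using assms cl_concept by blast+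
  have ne: "?D1 \<noteq> Cl" "?D2 \<noteq> Cl" using assms(3,4) by (metis fst_conv)+
  have "is_glb A B R {?D1, ?D2} Cl"
    unfolding is_glb_def cle_def
  proof (intro conjI ballI impI)
    show "Cl \<in> concepts A B R" by (rule Cl_concept)
    fix D assume "D \<in> {?D1, ?D2}" then show "fst Cl \<subseteq> fst D" using assms(5) by auto
  next
    fix E assume "E \<in> concepts A B R" "\<forall>D\<in>{?D1, ?D2}. fst E \<subseteq> fst D"
    then have "fst E \<subseteq> d" "fst E \<subseteq> e" by auto
    then show "fst E \<subseteq> fst Cl" using assms(5) by blast
  qed
  then show False using mi c ne unfolding meet_irreducible_def by blast
qed

lemma L_ne_B: "L \<noteq> B"
proof
  assume LB: "L = B"
  have P: "Cl \<in> concepts A B R \<and> (\<forall>D\<in>concepts A B R. cle D Cl)"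
    using Cl_concept LB concept_sub unfolding cle_def by blast
  have "ctop A B R = Cl" unfolding ctop_def
  proof (rule the_equality)
    show "Cl \<in> concepts A B R \<and> (\<forall>D\<in>concepts A B R. cle D Cl)" by (rule P)
    fix C assume "C \<in> concepts A B R \<and> (\<forall>D\<in>concepts A B R. cle D C)"
    then show "C = Cl" using P concept_eqI unfolding cle_def by (metis subset_antisym)
  qed
  then show False using mi unfolding meet_irreducible_def by blast
qed

lemma fin_mi: "finite F \<Longrightarrow> F \<subseteq> cl B G - {L} \<Longrightarrow> B \<inter> \<Inter>F \<noteq> L"
proof (induction F rule: finite_induct)
  case empty then show ?case using L_ne_B by simp
next
  case (insert d F)
  have dcl: "d \<in> cl B G" "d \<noteq> L" using insert by auto
  have e: "B \<inter> \<Inter>F \<in> cl B G" "B \<inter> \<Inter>F \<noteq> L" using insert cl_Inter[of F B G] by auto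
  have "B \<inter> \<Inter>(insert d F) = d \<inter> (B \<inter> \<Inter>F)" by auto
  then show ?case using mi2[OF dcl(1) e(1) dcl(2) e(2)] by auto
qed

lemma cmi:
  assumes S: "S \<subseteq> cl B G - {L}" shows "B \<inter> \<Inter>S \<noteq> L"
proof
  assume eq: "B \<inter> \<Inter>S = L"
  define Fam where "Fam = {B \<inter> \<Inter>F | F. finite F \<and> F \<subseteq> S}"
  have famcl: "Fam \<subseteq> cl B G" unfolding Fam_def using S cl_Inter by blast
  have "B \<in> Fam" unfolding Fam_def by (rule CollectI, rule exI[of _ "{}"]) auto
  note ex = wf_down[unfolded wf_eq_minimal, rule_format, OF this]
  then obtain m where m: "m \<in> Fam"
    and mmin: "\<And>y. (y, m) \<in> {(Y,X). X \<in> cl B G \<and> Y \<in> cl B G \<and> Y \<subset> X} \<Longrightarrow> y \<notin> Fam"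
    by blast
  obtain F0 where F0: "finite F0" "F0 \<subseteq> S" "m = B \<inter> \<Inter>F0" using m unfolding Fam_def by blast
  have "m \<subseteq> s" if s: "s \<in> S" for s
  proof (rule ccontr)
    assume "\<not> m \<subseteq> s"
    have "m \<inter> s = B \<inter> \<Inter>(insert s F0)" using F0 by auto
    then have "m \<inter> s \<in> Fam" unfolding Fam_def using F0 s by blast
    moreover have "m \<inter> s \<subset> m" using \<open>\<not> m \<subseteq> s\<close> by blast
    ultimately show False using mmin[of "m \<inter> s"] famcl m by blast
  qed
  then have "m \<subseteq> L" using eq F0 by blast
  moreover have "L \<subseteq> m" using eq F0 by blast
  ultimately have "B \<inter> \<Inter>F0 = L" using F0 by blast
  then show False using fin_mi[OF F0(1)] F0(2) S by blast
qed

end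


context M begin

abbreviation "Gs \<equiv> (\<lambda>a. down B R {a}) ` (A - Atg A B R Cl) \<union> fst ` new_attrs A B R Cl"
abbreviation "SB \<equiv> strictly_below A B R Cl"
abbreviation "Cs \<equiv> cjoin A B R SB"

lemma SB_sub: "SB \<subseteq> concepts A B R" unfolding strictly_below_def by blast

lemma Cs_props:
  assumes "Cs \<noteq> Cl"
  shows "Cs \<in> SB" "\<And>D. D \<in> SB \<Longrightarrow> cle D Cs" "Cs \<in> maximal_below A B R Cl"
proof -
  have lub: "is_lub A B R SB Cs" using lub_exists[OF SB_sub] .
  have "\<forall>D\<in>SB. cle D Cl" unfolding strictly_below_def by blast
  then have "cle Cs Cl" using lub Cl_concept unfolding is_lub_def by blast
  then show C1: "Cs \<in> SB" using lub assms unfolding is_lub_def strictly_below_def by blast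
  show C2: "\<And>D. D \<in> SB \<Longrightarrow> cle D Cs" using lub unfolding is_lub_def by blast
  show "Cs \<in> maximal_below A B R Cl" unfolding maximal_below_def
  proof (intro CollectI conjI C1 notI)
    assume "\<exists>D\<in>SB. cle Cs D \<and> Cs \<noteq> D"
    then obtain D where D: "D \<in> SB" "cle Cs D" "Cs \<noteq> D" by blast
    have "cle D Cs" using C2 D(1) .
    then have "fst Cs = fst D" using D(2) unfolding cle_def by blast
    moreover have "Cs \<in> concepts A B R" "D \<in> concepts A B R" using C1 D(1) SB_sub by blast+
    ultimately show False using concept_eqI D(3) by blast
  qed
qed

lemma new_sub: "new_attrs A B R Cl \<subseteq> SB"
  using Cs_props(1) unfolding new_attrs_def Let_def maximal_below_def by auto

lemma not_atg: "a \<in> A - Atg A B R Cl \<Longrightarrow> down B R {a} \<noteq> L"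
  unfolding Atg_def using concept_fst[OF Cl_concept] by auto

lemma gens_star: "gens (Astar A B R Cl) B (Rstar A B R Cl) = Gs"
proof -
  have 1: "down B (Rstar A B R Cl) {Inl a} = down B R {a}" if "a \<in> A - Atg A B R Cl" for a
    using that unfolding down_def Rstar_def by auto
  have 2: "down B (Rstar A B R Cl) {Inr C} = fst C" if "C \<in> new_attrs A B R Cl" for C
  proof -
    have "fst C \<subseteq> B" using that new_sub SB_sub concept_sub by blast
    then show ?thesis using that unfolding down_def Rstar_def by (auto, metis prod.collapse)
  qed
  have i1: "(\<lambda>a. down B (Rstar A B R Cl) {Inl a}) ` (A - Atg A B R Cl) = (\<lambda>a. down B R {a}) ` (A - Atg A B R Cl)"
    by (rule image_cong[OF refl 1])
  have i2: "(\<lambda>C. down B (Rstar A B R Cl) {Inr C}) ` new_attrs A B R Cl = fst ` new_attrs A B R Cl"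
    by (rule image_cong[OF refl 2])
  show ?thesis unfolding gens_def Astar_def image_Un image_image i1 i2 by (rule refl)
qed

lemma Gs_sub: "Gs \<subseteq> cl B G - {L}"
proof
  fix g assume g: "g \<in> Gs"
  show "g \<in> cl B G - {L}"
  proof (cases "g \<in> (\<lambda>a. down B R {a}) ` (A - Atg A B R Cl)")
    case True
    then obtain a where a: "a \<in> A - Atg A B R Cl" "g = down B R {a}" by blast
    have "g \<in> G" using a unfolding gens_def by blast
    moreover have "g \<subseteq> B" using a unfolding down_def by auto
    ultimately show ?thesis using cl_gen not_atg a by blast
  next
    case False
    then obtain C where C: "C \<in> SB" "g = fst C" using g new_sub by blast
    then show ?thesis using concept_in_cl concept_eqI Cl_concept unfolding strictly_below_def by blast
  qed
qed

lemma star_sub: "cl B Gs \<subseteq> cl B G - {L}"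
proof
  fix X assume "X \<in> cl B Gs"
  then obtain S where S: "S \<subseteq> Gs" "X = B \<inter> \<Inter>S" unfolding cl_def by blast
  then have "S \<subseteq> cl B G - {L}" using Gs_sub by blast
  then show "X \<in> cl B G - {L}" using S cl_Inter[of S B G] cmi by blast
qed

lemma G_other: "g \<in> G \<Longrightarrow> g \<noteq> L \<Longrightarrow> g \<in> Gs"
proof -
  assume g: "g \<in> G" "g \<noteq> L"
  then obtain a where a: "a \<in> A" "g = down B R {a}" unfolding gens_def by blast
  have "a \<notin> Atg A B R Cl" using a g unfolding Atg_def by auto
  then show "g \<in> Gs" using a by blast
qed

lemma part_A: "X \<in> cl B G \<Longrightarrow> \<not> X \<subseteq> L \<Longrightarrow> X \<in> cl B Gs"
proof -
  assume X: "X \<in> cl B G" "\<not> X \<subseteq> L"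
  have eq: "X = B \<inter> \<Inter>{g \<in> G. X \<subseteq> g}" using X(1) by (rule cl_char[THEN iffD1])
  have "{g \<in> G. X \<subseteq> g} \<subseteq> Gs" using X G_other by blast
  then show "X \<in> cl B Gs" unfolding cl_def using eq by blast
qed

lemma part_B:
  assumes m: "m \<in> maximal_below A B R Cl" and nn: "needs_new A B R Cl m \<Longrightarrow> m \<in> new_attrs A B R Cl"
  shows "fst m \<in> cl B Gs"
proof -
  have mSB: "m \<in> SB" using m unfolding maximal_below_def by blast
  then have mc: "m \<in> concepts A B R" "m \<noteq> Cl" "fst m \<subseteq> L" unfolding strictly_below_def cle_def by auto
  show ?thesis
  proof (cases "needs_new A B R Cl m")
    case True
    then have "fst m \<in> Gs" using nn by blast
    then show ?thesis by (rule cl_gen[OF _ concept_sub[OF mc(1)]])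
  next
    case False
    then consider (psi) \<psi> where "meet_decomposition A B R m \<psi>" "Cl \<notin> \<psi>"
      | (atg) "Atg A B R m \<noteq> {}" unfolding needs_new_def by blast
    then show ?thesis
    proof cases
      case atg
      then obtain a where a: "a \<in> A" "(down B R {a}, up A R (down B R {a})) = m" unfolding Atg_def by blast
      then have "a \<notin> Atg A B R Cl" using mc unfolding Atg_def by auto
      moreover have "fst m = down B R {a}" using a(2) by auto
      ultimately have "fst m \<in> (\<lambda>a. down B R {a}) ` (A - Atg A B R Cl)" using a(1) by blast
      then have "fst m \<in> Gs" by (rule UnI1)
      then show ?thesis by (rule cl_gen[OF _ concept_sub[OF mc(1)]])
    next
      case psi
      have psub: "\<psi> \<subseteq> concepts A B R" and glb: "is_glb A B R \<psi> m" and mnot: "m \<notin> \<psi>"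
        using psi unfolding meet_decomposition_def by auto
      have fm: "fst m = B \<inter> \<Inter>(fst ` \<psi>)" using glb_fst[OF glb psub] .
      have "fst D \<in> cl B Gs" if D: "D \<in> \<psi>" for D
      proof -
        have Dc: "D \<in> concepts A B R" using D psub by blast
        have cmD: "cle m D" using glb D unfolding is_glb_def by blast
        have "\<not> fst D \<subseteq> L"
        proof
          assume "fst D \<subseteq> L"
          then have "D \<in> SB" using Dc D psi(2) unfolding strictly_below_def cle_def by auto
          moreover have "m \<noteq> D" using mnot D by blast
          ultimately show False using m cmD unfolding maximal_below_def by blast
        qed
        then show ?thesis using part_A[OF concept_in_cl[OF Dc]] by blast
      qed
      then have "fst ` \<psi> \<subseteq> cl B Gs" by blast
      then show ?thesis unfolding fm by (rule cl_Inter)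
    qed
  qed
qed

lemma exists_max:
  assumes X: "X \<in> cl B G" "X \<subseteq> L" "X \<noteq> L"
  shows "\<exists>m \<in> maximal_below A B R Cl. X \<subseteq> fst m \<and> (needs_new A B R Cl m \<longrightarrow> m \<in> new_attrs A B R Cl)"
proof -
  have XSB: "(X, up A R X) \<in> SB" using X cl_concept[OF X(1)]
    unfolding strictly_below_def cle_def by auto
  show ?thesis
  proof (cases "Cs = Cl")
    case False
    have "X \<subseteq> fst Cs" using Cs_props(2)[OF False XSB] unfolding cle_def by simp
    moreover have "needs_new A B R Cl Cs \<longrightarrow> Cs \<in> new_attrs A B R Cl"
      using False unfolding new_attrs_def Let_def by simp
    ultimately show ?thesis using Cs_props(3)[OF False] by blast
  next
    case True
    have na: "new_attrs A B R Cl = {C \<in> maximal_below A B R Cl. needs_new A B R Cl C}"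
      using True unfolding new_attrs_def Let_def by simp
    let ?Q = "{Z \<in> cl B G. X \<subseteq> Z \<and> Z \<subseteq> L \<and> Z \<noteq> L}"
    have "X \<in> ?Q" using X by blast
    obtain z where z: "z \<in> ?Q"
      and zmax: "\<And>y. (y, z) \<in> {(Y,X). X \<in> cl B G \<and> Y \<in> cl B G \<and> X \<subset> Y} \<Longrightarrow> y \<notin> ?Q"
      using wf_up[unfolded wf_eq_minimal, rule_format, OF \<open>X \<in> ?Q\<close>] by blast
    let ?m = "(z, up A R z)"
    have mc: "?m \<in> concepts A B R" using z cl_concept by blast
    have mSB: "?m \<in> SB" using mc z unfolding strictly_below_def cle_def by auto
    have mmax: "?m \<in> maximal_below A B R Cl"
      unfolding maximal_below_def
    proof (intro CollectI conjI mSB notI)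
      assume "\<exists>D\<in>SB. cle ?m D \<and> ?m \<noteq> D"
      then obtain D where D: "D \<in> SB" "cle ?m D" "?m \<noteq> D" by blast
      have Dc: "D \<in> concepts A B R" using D SB_sub by blast
      have "z \<noteq> fst D" using concept_eqI[OF mc Dc] D(3) by auto
      then have zD: "z \<subset> fst D" using D(2) unfolding cle_def by auto
      have "fst D \<noteq> L" using concept_eqI[OF Dc Cl_concept] D(1) unfolding strictly_below_def by blast
      then have "fst D \<in> ?Q" using D(1) Dc concept_in_cl z zD unfolding strictly_below_def cle_def by blast
      then show False using zmax[of "fst D"] zD z concept_in_cl[OF Dc] by blast
    qed
    have "needs_new A B R Cl ?m \<longrightarrow> ?m \<in> new_attrs A B R Cl" using mmax unfolding na by blast
    moreover have "X \<subseteq> fst ?m" using z by simp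
    ultimately show ?thesis using mmax by blast
  qed
qed

lemma part_C: "X \<in> cl B G \<Longrightarrow> X \<noteq> L \<Longrightarrow> X \<in> cl B Gs"
proof -
  assume X: "X \<in> cl B G" "X \<noteq> L"
  show "X \<in> cl B Gs"
  proof (cases "X \<subseteq> L")
    case False then show ?thesis using part_A[OF X(1)] by blast
  next
    case True
    obtain m where m: "m \<in> maximal_below A B R Cl" "X \<subseteq> fst m"
      "needs_new A B R Cl m \<longrightarrow> m \<in> new_attrs A B R Cl"
      using exists_max[OF X(1) True X(2)] by blast
    have fm: "fst m \<in> cl B Gs" using part_B[OF m(1)] m(3) by blast
    have mL: "fst m \<subseteq> L" using m unfolding maximal_below_def strictly_below_def cle_def by blast
    let ?X' = "B \<inter> \<Inter>{g \<in> G. X \<subseteq> g \<and> g \<noteq> L}"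
    have "{g \<in> G. X \<subseteq> g \<and> g \<noteq> L} \<subseteq> Gs" using G_other by blast
    then have X'cl: "?X' \<in> cl B Gs" unfolding cl_def by blast
    have eq: "X = B \<inter> \<Inter>{g \<in> G. X \<subseteq> g}" using X(1) by (rule cl_char[THEN iffD1])
    have "X = ?X' \<inter> fst m"
    proof
      show "X \<subseteq> ?X' \<inter> fst m" using m(2) cl_subset[OF X(1)] by blast
      show "?X' \<inter> fst m \<subseteq> X"
      proof
        fix x assume x: "x \<in> ?X' \<inter> fst m"
        have "x \<in> B \<inter> \<Inter>{g \<in> G. X \<subseteq> g}" using x mL by auto
        then show "x \<in> X" using eq by simp
      qed
    qed
    then show ?thesis using cl_Int2[OF X'cl fm] by simp
  qed
qed

lemma cl_star: "cl B Gs = cl B G - {L}"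
proof (rule equalityI)
  show "cl B Gs \<subseteq> cl B G - {L}" by (rule star_sub)
  show "cl B G - {L} \<subseteq> cl B Gs" using part_C by blast
qed

end

theorem mainTheorem9:
  fixes A :: "'a set" and B :: "'b set" and R :: "('a \<times> 'b) set"
    and Cl :: "'b set \<times> 'a set"
  assumes "R \<subseteq> A \<times> B"
    and "no_infinite_chains A B R"
    and "meet_irreducible A B R Cl"
  shows "\<exists>f. bij_betw f (concepts A B R - {Cl}) (concepts (Astar A B R Cl) B (Rstar A B R Cl)) \<and>
           (\<forall>C\<in>concepts A B R - {Cl}. \<forall>D\<in>concepts A B R - {Cl}. cle C D \<longleftrightarrow> cle (f C) (f D))"
proof -
  interpret M A B R Cl using assms(2,3) by unfold_locales
  let ?As = "Astar A B R Cl" and ?Rs = "Rstar A B R Cl"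
  define f where "f = (\<lambda>C::'b set \<times> 'a set. (fst C, up ?As ?Rs (fst C)))"
  have e1: "gens ?As B ?Rs = Gs" by (rule gens_star)
  have e2: "cl B (gens ?As B ?Rs) = cl B (gens A B R) - {fst Cl}" unfolding e1 by (rule cl_star)
  have key: "X \<in> cl B (gens ?As B ?Rs) \<longleftrightarrow> X \<in> cl B (gens A B R) \<and> X \<noteq> fst Cl" for X
    unfolding e2 by blast
  have "bij_betw f (concepts A B R - {Cl}) (concepts ?As B ?Rs)"
  proof (rule bij_betw_imageI)
    show "inj_on f (concepts A B R - {Cl})"
    proof (rule inj_onI)
      fix C D assume "C \<in> concepts A B R - {Cl}" "D \<in> concepts A B R - {Cl}" "f C = f D"
      then show "C = D" using concept_eqI[of C A B R D] unfolding f_def by auto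
    qed
    show "f ` (concepts A B R - {Cl}) = concepts ?As B ?Rs"
    proof
      show "f ` (concepts A B R - {Cl}) \<subseteq> concepts ?As B ?Rs"
      proof
        fix E assume "E \<in> f ` (concepts A B R - {Cl})"
        then obtain C where C: "C \<in> concepts A B R" "C \<noteq> Cl" "E = f C" by blast
        have "fst C \<noteq> fst Cl" using C concept_eqI Cl_concept by blast
        then have "fst C \<in> cl B (gens ?As B ?Rs)" using key concept_in_cl C by blast
        then show "E \<in> concepts ?As B ?Rs" using C(3) cl_concept unfolding f_def by blast
      qed
      show "concepts ?As B ?Rs \<subseteq> f ` (concepts A B R - {Cl})"
      proof
        fix E assume E: "E \<in> concepts ?As B ?Rs"
        have "fst E \<in> cl B (gens ?As B ?Rs)" using concept_in_cl E by blast
        then have F: "fst E \<in> cl B (gens A B R)" "fst E \<noteq> fst Cl" using key by auto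
        let ?C = "(fst E, up A R (fst E))"
        have "?C \<in> concepts A B R" using F(1) by (rule cl_concept)
        moreover have "?C \<noteq> Cl" using F(2) by auto
        ultimately have "?C \<in> concepts A B R - {Cl}" by blast
        moreover have "f ?C = E" using concept_fst[OF E] unfolding f_def by simp
        ultimately show "E \<in> f ` (concepts A B R - {Cl})" by (metis image_eqI)
      qed
    qed
  qed
  moreover have "\<forall>C\<in>concepts A B R - {Cl}. \<forall>D\<in>concepts A B R - {Cl}. cle C D \<longleftrightarrow> cle (f C) (f D)"
    unfolding f_def cle_def by simp
  ultimately show ?thesis by blast
qed

end
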